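(* Let $\mathcal{S}=\{s_1,\dots,s_N\}$ be a finite state space, $\mathcal{A}$ a finite action space and $\gamma\in(0,1)$. Consider the real MDP $\langle\mathcal{S},\mathcal{A},\mathbb{P},R,\gamma\rangle$ and the DT MDP $\langle\mathcal{S},\mathcal{A},\mathbb{P}',R',\gamma\rangle$. Then for every deterministic policy $\pi:\mathcal{S}\to\mathcal{A}$, $$\|V_{\mathrm{real}}^*-V_{\mathrm{real}}^{\pi}\|\le \frac{2}{1-\gamma}\max_i \bar d(s_i,s_i)+\frac{1+\gamma}{1-\gamma}\|V_{\mathrm{DT}}^*-V_{\mathrm{DT}}^{\pi}\|\le \frac{2}{(1-\gamma)^2}\max_i d_{\mathrm{TV}}(s_i,s_i)+\frac{1+\gamma}{1-\gamma}\|V_{\mathrm{DT}}^*-V_{\mathrm{DT}}^{\pi}\|.$$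
   Context: $\mathbb{P}(\cdot|s,a)$ and $\mathbb{P}'(\cdot|s,a)$ are probability distributions on $\mathcal{S}$ for each $(s,a)$; $R,R':\mathcal{S}\times\mathcal{A}\to\mathbb{R}$ are reward functions. For a deterministic policy $\pi$, $V^\pi_{\mathrm{real}}$ is the unique solution of $V(s)=R(s,\pi(s))+\gamma\sum_{\tilde s}\mathbb{P}(\tilde s|s,\pi(s))V(\tilde s)$ for all $s$, and $V^*_{\mathrm{real}}$ the unique solution of $V(s)=\max_a\{R(s,a)+\gamma\sum_{\tilde s}\mathbb{P}(\tilde s|s,a)V(\tilde s)\}$; $V^\pi_{\mathrm{DT}},V^*_{\mathrm{DT}}$ are defined in the same way with $\mathbb{P}',R'$. Define $\|V^*_{\mathrm{real}}-V^\pi_{\mathrm{real}}\|=\max_i\{V^*_{\mathrm{real}}(s_i)-V^\pi_{\mathrm{real}}(s_i)\}$ and similarly $\|V^*_{\mathrm{DT}}-V^\pi_{\mathrm{DT}}\|$. Let $R_{\max}=\max_{i,j,a}|R(s_i,a)-R'(s_j,a)|$. For probability distributions $P,Q$ on $\mathcal{S}$ and a cost $d:\mathcal{S}\times\mathcal{S}\to[0,\infty)$ (not required to vanish on the diagonal; the first argument is regarded as a state of the real MDP and the second as a state of the DT MDP), $W_1(P,Q;d)=\min_{\Lambda}\sum_{i,j}\lambda_{i,j}d(s_i,s_j)$, the minimum over nonnegative $N\times N$ matrices $\Lambda=(\lambda_{i,j})$ with $\sum_j\lambda_{i,j}=P(s_i)$ and $\sum_i\lambda_{i,j}=Q(s_j)$.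 Define $d_0\equiv0$ and $d_n(s_i,s_j)=\max_a\{|R(s_i,a)-R'(s_j,a)|+\gamma W_1(\mathbb{P}(\cdot|s_i,a),\mathbb{P}'(\cdot|s_j,a);d_{n-1})\}$; the DT bisimulation metric $\bar d$ is the pointwise limit (equivalently supremum) of the nondecreasing sequence $d_n$, and it satisfies $\bar d(s_i,s_j)=\max_a\{|R(s_i,a)-R'(s_j,a)|+\gamma W_1(\mathbb{P}(\cdot|s_i,a),\mathbb{P}'(\cdot|s_j,a);\bar d)\}$. With $\mathrm{TV}(P,Q)=\frac12\sum_i|P(s_i)-Q(s_i)|$, define $d_{\mathrm{TV}}(s_i,s_i)=\max_a\{|R(s_i,a)-R'(s_i,a)|+\frac{\gamma R_{\max}}{1-\gamma}\mathrm{TV}(\mathbb{P}(\cdot|s_i,a),\mathbb{P}'(\cdot|s_i,a))\}$. *)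

theory Defs
  imports Complex_Main
begin

text \<open>States: finite type 's; actions: finite type 'a. Transition kernels are
  functions P s a t = probability of moving to t from s under action a.\<close>

definition is_dist :: "('s::finite \<Rightarrow> real) \<Rightarrow> bool" where
  "is_dist p \<longleftrightarrow> (\<forall>s. p s \<ge> 0) \<and> (\<Sum>s\<in>UNIV. p s) = 1"

definition policy_value ::
  "('s::finite \<Rightarrow> 'a::finite \<Rightarrow> 's \<Rightarrow> real) \<Rightarrow> ('s \<Rightarrow> 'a \<Rightarrow> real) \<Rightarrow> real \<Rightarrow> ('s \<Rightarrow> 'a) \<Rightarrow> 's \<Rightarrow> real" where
  "policy_value P R \<gamma> \<pi> =
     (THE V. \<forall>s. V s = R s (\<pi> s) + \<gamma> * (\<Sum>t\<in>UNIV. P s (\<pi> s) t * V t))"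

definition optimal_value ::
  "('s::finite \<Rightarrow> 'a::finite \<Rightarrow> 's \<Rightarrow> real) \<Rightarrow> ('s \<Rightarrow> 'a \<Rightarrow> real) \<Rightarrow> real \<Rightarrow> 's \<Rightarrow> real" where
  "optimal_value P R \<gamma> =
     (THE V. \<forall>s. V s = Max ((\<lambda>a. R s a + \<gamma> * (\<Sum>t\<in>UNIV. P s a t * V t)) ` UNIV))"

definition value_gap ::
  "('s::finite \<Rightarrow> 'a::finite \<Rightarrow> 's \<Rightarrow> real) \<Rightarrow> ('s \<Rightarrow> 'a \<Rightarrow> real) \<Rightarrow> real \<Rightarrow> ('s \<Rightarrow> 'a) \<Rightarrow> real" where
  "value_gap P R \<gamma> \<pi> =
     Max ((\<lambda>s. optimal_value P R \<gamma> s - policy_value P R \<gamma> \<pi> s) ` UNIV)"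

definition R_max :: "('s::finite \<Rightarrow> 'a::finite \<Rightarrow> real) \<Rightarrow> ('s \<Rightarrow> 'a \<Rightarrow> real) \<Rightarrow> real" where
  "R_max R R' = Max ((\<lambda>(i, j, a). \<bar>R i a - R' j a\<bar>) ` UNIV)"

text \<open>Wasserstein-1 with cost d (first argument: real state, second: DT state),
  minimum over couplings (written as infimum; the minimum is attained).\<close>
definition W1 :: "('s::finite \<Rightarrow> real) \<Rightarrow> ('s \<Rightarrow> real) \<Rightarrow> ('s \<Rightarrow> 's \<Rightarrow> real) \<Rightarrow> real" where
  "W1 p q d = Inf {(\<Sum>i\<in>UNIV. \<Sum>j\<in>UNIV. L i j * d i j) | L.
       (\<forall>i j. L i j \<ge> 0) \<and> (\<forall>i. (\<Sum>j\<in>UNIV. L i j) = p i) \<and> (\<forall>j. (\<Sum>i\<in>UNIV. L i j) = q j)}"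

primrec bisim_seq ::
  "('s::finite \<Rightarrow> 'a::finite \<Rightarrow> 's \<Rightarrow> real) \<Rightarrow> ('s \<Rightarrow> 'a \<Rightarrow> real) \<Rightarrow>
   ('s \<Rightarrow> 'a \<Rightarrow> 's \<Rightarrow> real) \<Rightarrow> ('s \<Rightarrow> 'a \<Rightarrow> real) \<Rightarrow> real \<Rightarrow> nat \<Rightarrow> 's \<Rightarrow> 's \<Rightarrow> real" where
  "bisim_seq P R P' R' \<gamma> 0 = (\<lambda>s s'. 0)"
| "bisim_seq P R P' R' \<gamma> (Suc n) = (\<lambda>s s'.
     Max ((\<lambda>a. \<bar>R s a - R' s' a\<bar> + \<gamma> * W1 (P s a) (P' s' a) (bisim_seq P R P' R' \<gamma> n)) ` UNIV))"

text \<open>DT bisimulation metric: supremum (= limit) of the nondecreasing sequence d_n.\<close>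
definition bisim_metric ::
  "('s::finite \<Rightarrow> 'a::finite \<Rightarrow> 's \<Rightarrow> real) \<Rightarrow> ('s \<Rightarrow> 'a \<Rightarrow> real) \<Rightarrow>
   ('s \<Rightarrow> 'a \<Rightarrow> 's \<Rightarrow> real) \<Rightarrow> ('s \<Rightarrow> 'a \<Rightarrow> real) \<Rightarrow> real \<Rightarrow> 's \<Rightarrow> 's \<Rightarrow> real" where
  "bisim_metric P R P' R' \<gamma> s s' = (SUP n. bisim_seq P R P' R' \<gamma> n s s')"

definition TV :: "('s::finite \<Rightarrow> real) \<Rightarrow> ('s \<Rightarrow> real) \<Rightarrow> real" where
  "TV p q = (1/2) * (\<Sum>s\<in>UNIV. \<bar>p s - q s\<bar>)"

definition d_TV ::
  "('s::finite \<Rightarrow> 'a::finite \<Rightarrow> 's \<Rightarrow> real) \<Rightarrow> ('s \<Rightarrow> 'a \<Rightarrow> real) \<Rightarrow>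
   ('s \<Rightarrow> 'a \<Rightarrow> 's \<Rightarrow> real) \<Rightarrow> ('s \<Rightarrow> 'a \<Rightarrow> real) \<Rightarrow> real \<Rightarrow> 's \<Rightarrow> real" where
  "d_TV P R P' R' \<gamma> s = Max ((\<lambda>a. \<bar>R s a - R' s a\<bar>
       + \<gamma> * R_max R R' / (1 - \<gamma>) * TV (P s a) (P' s a)) ` UNIV)"

end

theory Submission
  imports Defs
begin


lemma Max_diff_le:
  fixes f g :: "'a::finite \<Rightarrow> real"
  shows "\<bar>Max (range f) - Max (range g)\<bar> \<le> Max (range (\<lambda>a. \<bar>f a - g a\<bar>))"
proof -
  let ?m = "Max (range (\<lambda>a. \<bar>f a - g a\<bar>))"
  have h: "\<bar>f a - g a\<bar> \<le> ?m" for a by (rule Max_ge) auto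
  have "f a \<le> Max (range g) + ?m" for a
  proof -
    have "g a \<le> Max (range g)" by (rule Max_ge) auto
    thus ?thesis using h[of a] by linarith
  qed
  hence 1: "Max (range f) \<le> Max (range g) + ?m" by (subst Max_le_iff) auto
  have "g a \<le> Max (range f) + ?m" for a
  proof -
    have "f a \<le> Max (range f)" by (rule Max_ge) auto
    thus ?thesis using h[of a] by linarith
  qed
  hence 2: "Max (range g) \<le> Max (range f) + ?m" by (subst Max_le_iff) auto
  show ?thesis using 1 2 by linarith
qed

definition supd :: "('s::finite \<Rightarrow> real) \<Rightarrow> ('s \<Rightarrow> real) \<Rightarrow> real" where
  "supd V W = Max (range (\<lambda>t. \<bar>V t - W t\<bar>))"

lemma supd_ge: "\<bar>V t - W t\<bar> \<le> supd V W"
  unfolding supd_def by (rule Max_ge) auto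

lemma supd_nonneg: "0 \<le> supd V W"
  using supd_ge[of V undefined W] by linarith

lemma supd_le: "(\<And>t. \<bar>V t - W t\<bar> \<le> c) \<Longrightarrow> supd V W \<le> c"
  unfolding supd_def by (subst Max_le_iff) auto

lemma supd_le_sum: "supd V W \<le> (\<Sum>t\<in>UNIV. \<bar>V t - W t\<bar>)"
  by (rule supd_le) (rule member_le_sum, auto)

lemma contraction_fix:
  fixes F :: "('s::finite \<Rightarrow> real) \<Rightarrow> 's \<Rightarrow> real"
  assumes g: "0 \<le> \<gamma>" "\<gamma> < 1"
    and c: "\<And>V W s. \<bar>F V s - F W s\<bar> \<le> \<gamma> * supd V W"
  shows "\<exists>!V. \<forall>s. V s = F V s"
proof -
  define X where "X n = (F ^^ n) (\<lambda>_. 0)" for n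
  define c0 where "c0 = supd (X 1) (X 0)"
  have XS: "X (Suc n) = F (X n)" for n by (simp add: X_def)
  have step: "supd (X (Suc n)) (X n) \<le> \<gamma>^n * c0" for n
  proof (induction n)
    case 0 thus ?case by (simp add: c0_def)
  next
    case (Suc n)
    have "\<bar>X (Suc (Suc n)) t - X (Suc n) t\<bar> \<le> \<gamma>^Suc n * c0" for t
    proof -
      have "\<bar>X (Suc (Suc n)) t - X (Suc n) t\<bar> \<le> \<gamma> * supd (X (Suc n)) (X n)"
        unfolding XS[of "Suc n"] XS[of n] by (rule c)
      also have "\<dots> \<le> \<gamma> * (\<gamma>^n * c0)" using Suc g by (intro mult_left_mono) auto
      finally show ?thesis by simp
    qed
    thus ?case by (intro supd_le)
  qed
  have summ: "summable (\<lambda>k. X (Suc k) s - X k s)" for s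
  proof (rule summable_comparison_test[of _ "\<lambda>k. c0 * \<gamma>^k"])
    show "\<exists>N. \<forall>n\<ge>N. norm (X (Suc n) s - X n s) \<le> c0 * \<gamma>^n"
      using step supd_ge order_trans by (metis mult.commute real_norm_def)
    show "summable (\<lambda>k. c0 * \<gamma>^k)" using g by (intro summable_mult summable_geometric) auto
  qed
  define L where "L s = X 0 s + (\<Sum>k. X (Suc k) s - X k s)" for s
  have conv: "(\<lambda>n. X n s) \<longlonglongrightarrow> L s" for s
  proof -
    have "(\<lambda>n. \<Sum>k<n. X (Suc k) s - X k s) \<longlonglongrightarrow> (\<Sum>k. X (Suc k) s - X k s)"
      using summ summable_LIMSEQ by blast
    hence "(\<lambda>n. X 0 s + (\<Sum>k<n. X (Suc k) s - X k s)) \<longlonglongrightarrow> L s"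
      unfolding L_def by (intro tendsto_add) auto
    moreover have "X 0 s + (\<Sum>k<n. X (Suc k) s - X k s) = X n s" for n
      using sum_lessThan_telescope[of "\<lambda>k. X k s" n] by simp
    ultimately show ?thesis by simp
  qed
  have fixL: "L s = F L s" for s
  proof -
    have "(\<lambda>n. \<Sum>t\<in>UNIV. \<bar>X n t - L t\<bar>) \<longlonglongrightarrow> (\<Sum>t\<in>UNIV. \<bar>L t - L t\<bar>)"
      by (intro tendsto_sum tendsto_rabs tendsto_diff conv tendsto_const)
    hence z: "(\<lambda>n. \<gamma> * (\<Sum>t\<in>UNIV. \<bar>X n t - L t\<bar>)) \<longlonglongrightarrow> 0"
      using tendsto_mult_right_zero by fastforce
    hence z': "(\<lambda>n. - (\<gamma> * (\<Sum>t\<in>UNIV. \<bar>X n t - L t\<bar>))) \<longlonglongrightarrow> 0"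
      using tendsto_minus by fastforce
    have b: "\<bar>F (X n) s - F L s\<bar> \<le> \<gamma> * (\<Sum>t\<in>UNIV. \<bar>X n t - L t\<bar>)" for n
      using c[where V="X n" and W=L and s=s] mult_left_mono[OF supd_le_sum[where V="X n" and W=L] g(1)] by linarith
    have "(\<lambda>n. F (X n) s - F L s) \<longlonglongrightarrow> 0"
      by (rule tendsto_sandwich[OF _ _ z' z]) (use b in \<open>auto simp: abs_le_iff intro!: always_eventually\<close>, smt (verit) b)
    hence "(\<lambda>n. F (X n) s) \<longlonglongrightarrow> F L s" by (simp add: LIM_zero_iff)
    moreover have "(\<lambda>n. F (X n) s) \<longlonglongrightarrow> L s"
      using LIMSEQ_Suc[OF conv[of s]] unfolding XS .
    ultimately show ?thesis using LIMSEQ_unique by blast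
  qed
  have uniq: "V = L" if V: "\<forall>s. V s = F V s" for V
  proof -
    have "\<bar>V t - L t\<bar> \<le> \<gamma> * supd V L" for t using c[where V=V and W=L and s=t] V fixL by metis
    hence "supd V L \<le> \<gamma> * supd V L" by (rule supd_le)
    hence "supd V L \<le> 0" using g supd_nonneg[where V=V and W=L]
      by (metis mult_le_cancel_right1 not_le order_less_le)
    hence "\<bar>V t - L t\<bar> \<le> 0" for t using supd_ge[of V t L] by linarith
    thus ?thesis by force
  qed
  show ?thesis using fixL uniq by blast
qed



lemma dist_sum_bound:
  assumes "is_dist p"
  shows "\<bar>(\<Sum>t\<in>UNIV. p t * V t) - (\<Sum>t\<in>UNIV. p t * W t)\<bar> \<le> supd V W"
proof -
  have "\<bar>(\<Sum>t\<in>UNIV. p t * V t) - (\<Sum>t\<in>UNIV. p t * W t)\<bar> = \<bar>\<Sum>t\<in>UNIV. p t * (V t - W t)\<bar>"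
    by (simp add: sum_subtractf right_diff_distrib)
  also have "\<dots> \<le> (\<Sum>t\<in>UNIV. \<bar>p t * (V t - W t)\<bar>)" by (rule sum_abs)
  also have "\<dots> \<le> (\<Sum>t\<in>UNIV. p t * supd V W)"
  proof (rule sum_mono)
    fix t
    have "p t \<ge> 0" using assms by (simp add: is_dist_def)
    thus "\<bar>p t * (V t - W t)\<bar> \<le> p t * supd V W"
      by (simp add: abs_mult mult_left_mono supd_ge)
  qed
  also have "\<dots> = supd V W" using assms by (simp add: is_dist_def sum_distrib_right[symmetric])
  finally show ?thesis .
qed

lemma policy_fix:
  assumes g: "0 \<le> \<gamma>" "\<gamma> < 1" and d: "\<forall>s a. is_dist (P s a)"
  shows "policy_value P R \<gamma> \<pi> s = R s (\<pi> s) + \<gamma> * (\<Sum>t\<in>UNIV. P s (\<pi> s) t * policy_value P R \<gamma> \<pi> t)"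
proof -
  define F where "F V s = R s (\<pi> s) + \<gamma> * (\<Sum>t\<in>UNIV. P s (\<pi> s) t * V t)" for V s
  have "\<exists>!V. \<forall>s. V s = F V s"
  proof (rule contraction_fix[OF g])
    fix V W s
    have "\<bar>F V s - F W s\<bar> = \<gamma> * \<bar>(\<Sum>t\<in>UNIV. P s (\<pi> s) t * V t) - (\<Sum>t\<in>UNIV. P s (\<pi> s) t * W t)\<bar>"
      using g by (simp add: F_def abs_mult right_diff_distrib[symmetric])
    also have "\<dots> \<le> \<gamma> * supd V W" using g d by (intro mult_left_mono dist_sum_bound) auto
    finally show "\<bar>F V s - F W s\<bar> \<le> \<gamma> * supd V W" .
  qed
  hence th: "\<forall>s. (THE V. \<forall>s. V s = F V s) s = F (THE V. \<forall>s. V s = F V s) s"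
    by (rule theI')
  have eq: "policy_value P R \<gamma> \<pi> = (THE V. \<forall>s. V s = F V s)"
    unfolding policy_value_def F_def by (rule refl)
  have "\<forall>s. policy_value P R \<gamma> \<pi> s = F (policy_value P R \<gamma> \<pi>) s"
    using th unfolding eq[symmetric] .
  thus ?thesis unfolding F_def by blast
qed

lemma optimal_fix:
  assumes g: "0 \<le> \<gamma>" "\<gamma> < 1" and d: "\<forall>s a. is_dist (P s a)"
  shows "optimal_value P R \<gamma> s = Max (range (\<lambda>a. R s a + \<gamma> * (\<Sum>t\<in>UNIV. P s a t * optimal_value P R \<gamma> t)))"
proof -
  define F where "F V s = Max (range (\<lambda>a. R s a + \<gamma> * (\<Sum>t\<in>UNIV. P s a t * V t)))" for V s
  have "\<exists>!V. \<forall>s. V s = F V s"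
  proof (rule contraction_fix[OF g])
    fix V W s
    have "\<bar>F V s - F W s\<bar> \<le> Max (range (\<lambda>a. \<bar>(R s a + \<gamma> * (\<Sum>t\<in>UNIV. P s a t * V t)) - (R s a + \<gamma> * (\<Sum>t\<in>UNIV. P s a t * W t))\<bar>))"
      unfolding F_def by (rule Max_diff_le)
    also have "\<dots> \<le> \<gamma> * supd V W"
    proof (subst Max_le_iff, simp, simp, clarify)
      fix a
      have "\<bar>(R s a + \<gamma> * (\<Sum>t\<in>UNIV. P s a t * V t)) - (R s a + \<gamma> * (\<Sum>t\<in>UNIV. P s a t * W t))\<bar>
          = \<gamma> * \<bar>(\<Sum>t\<in>UNIV. P s a t * V t) - (\<Sum>t\<in>UNIV. P s a t * W t)\<bar>"
        using g by (simp add: abs_mult right_diff_distrib[symmetric])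
      also have "\<dots> \<le> \<gamma> * supd V W" using g d by (intro mult_left_mono dist_sum_bound) auto
      finally show "\<bar>(R s a + \<gamma> * (\<Sum>t\<in>UNIV. P s a t * V t)) - (R s a + \<gamma> * (\<Sum>t\<in>UNIV. P s a t * W t))\<bar> \<le> \<gamma> * supd V W" .
    qed
    finally show "\<bar>F V s - F W s\<bar> \<le> \<gamma> * supd V W" .
  qed
  hence th: "\<forall>s. (THE V. \<forall>s. V s = F V s) s = F (THE V. \<forall>s. V s = F V s) s"
    by (rule theI')
  have eq: "optimal_value P R \<gamma> = (THE V. \<forall>s. V s = F V s)"
    unfolding optimal_value_def F_def by (rule refl)
  have "\<forall>s. optimal_value P R \<gamma> s = F (optimal_value P R \<gamma>) s"
    using th unfolding eq[symmetric] .
  thus ?thesis unfolding F_def by blast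
qed

lemma optimal_ge_policy:
  assumes g: "0 \<le> \<gamma>" "\<gamma> < 1" and d: "\<forall>s a. is_dist (P s a)"
  shows "policy_value P R \<gamma> \<pi> s \<le> optimal_value P R \<gamma> s"
proof -
  define D where "D t = optimal_value P R \<gamma> t - policy_value P R \<gamma> \<pi> t" for t
  define m where "m = Min (range D)"
  have "m \<in> range D" unfolding m_def by (rule Min_in) auto
  then obtain s0 where s0: "D s0 = m" by auto
  have mle: "m \<le> D t" for t unfolding m_def by (rule Min_le) auto
  have "R s0 (\<pi> s0) + \<gamma> * (\<Sum>t\<in>UNIV. P s0 (\<pi> s0) t * optimal_value P R \<gamma> t) \<le> optimal_value P R \<gamma> s0"
    unfolding optimal_fix[OF g d, of R s0] by (rule Max_ge) auto
  moreover have "(\<Sum>t\<in>UNIV. P s0 (\<pi> s0) t * D t) = (\<Sum>t\<in>UNIV. P s0 (\<pi> s0) t * optimal_value P R \<gamma> t) - (\<Sum>t\<in>UNIV. P s0 (\<pi> s0) t * policy_value P R \<gamma> \<pi> t)"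
    unfolding D_def by (simp add: right_diff_distrib sum_subtractf)
  moreover note policy_fix[OF g d, of R \<pi> s0]
  ultimately have "\<gamma> * (\<Sum>t\<in>UNIV. P s0 (\<pi> s0) t * D t) \<le> D s0"
    unfolding D_def by (simp only: right_diff_distrib)
  moreover have "\<gamma> * m \<le> \<gamma> * (\<Sum>t\<in>UNIV. P s0 (\<pi> s0) t * D t)"
  proof (rule mult_left_mono[OF _ g(1)])
    have "(\<Sum>t\<in>UNIV. P s0 (\<pi> s0) t * m) \<le> (\<Sum>t\<in>UNIV. P s0 (\<pi> s0) t * D t)"
      using d mle by (intro sum_mono mult_left_mono) (auto simp: is_dist_def)
    moreover have "(\<Sum>t\<in>UNIV. P s0 (\<pi> s0) t * m) = m"
      using d by (simp add: is_dist_def sum_distrib_right[symmetric])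
    ultimately show "m \<le> (\<Sum>t\<in>UNIV. P s0 (\<pi> s0) t * D t)" by simp
  qed
  ultimately have "\<gamma> * m \<le> m" using s0 by simp
  hence "(1 - \<gamma>) * m \<ge> 0" by (simp add: algebra_simps)
  hence "m \<ge> 0" using g by (simp add: zero_le_mult_iff)
  thus ?thesis using mle[of s] by (simp add: D_def)
qed



definition coup :: "('s::finite \<Rightarrow> real) \<Rightarrow> ('s \<Rightarrow> real) \<Rightarrow> ('s \<Rightarrow> 's \<Rightarrow> real) \<Rightarrow> bool" where
  "coup p q L \<longleftrightarrow> (\<forall>i j. L i j \<ge> 0) \<and> (\<forall>i. (\<Sum>j\<in>UNIV. L i j) = p i) \<and> (\<forall>j. (\<Sum>i\<in>UNIV. L i j) = q j)"

lemma W1_eq: "W1 p q d = Inf ((\<lambda>L. \<Sum>i\<in>UNIV. \<Sum>j\<in>UNIV. L i j * d i j) ` Collect (coup p q))"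
  unfolding W1_def coup_def by (rule arg_cong[where f=Inf]) auto

lemma coup_prod:
  assumes "is_dist p" "is_dist q"
  shows "coup p q (\<lambda>i j. p i * q j)"
  using assms unfolding coup_def is_dist_def
  by (auto simp: sum_distrib_left[symmetric] sum_distrib_right[symmetric])

lemma coup_total:
  assumes "coup p q L" "is_dist p"
  shows "(\<Sum>i\<in>UNIV. \<Sum>j\<in>UNIV. L i j) = 1"
  using assms unfolding coup_def is_dist_def by simp

lemma W1_lower:
  assumes "coup p q L" "\<forall>i j. 0 \<le> d i j"
  shows "W1 p q d \<le> (\<Sum>i\<in>UNIV. \<Sum>j\<in>UNIV. L i j * d i j)"
  unfolding W1_eq
proof (rule cInf_lower)
  show "(\<Sum>i\<in>UNIV. \<Sum>j\<in>UNIV. L i j * d i j) \<in> (\<lambda>L. \<Sum>i\<in>UNIV. \<Sum>j\<in>UNIV. L i j * d i j) ` Collect (coup p q)"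
    using assms by auto
  show "bdd_below ((\<lambda>L. \<Sum>i\<in>UNIV. \<Sum>j\<in>UNIV. L i j * d i j) ` Collect (coup p q))"
    using assms by (intro bdd_belowI[where m=0]) (auto simp: coup_def intro!: sum_nonneg)
qed

lemma W1_greatest:
  assumes "is_dist p" "is_dist q" "\<And>L. coup p q L \<Longrightarrow> x \<le> (\<Sum>i\<in>UNIV. \<Sum>j\<in>UNIV. L i j * d i j)"
  shows "x \<le> W1 p q d"
  unfolding W1_eq
proof (rule cInf_greatest)
  show "(\<lambda>L. \<Sum>i\<in>UNIV. \<Sum>j\<in>UNIV. L i j * d i j) ` Collect (coup p q) \<noteq> {}"
    using coup_prod[OF assms(1,2)] by auto
qed (use assms in auto)

lemma W1_nonneg:
  assumes "is_dist p" "is_dist q" "\<forall>i j. 0 \<le> d i j"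
  shows "0 \<le> W1 p q d"
  using assms by (intro W1_greatest) (auto simp: coup_def intro!: sum_nonneg)

lemma coup_bound:
  assumes "coup p q L" "is_dist p" "\<forall>i j. d i j \<le> K"
  shows "(\<Sum>i\<in>UNIV. \<Sum>j\<in>UNIV. L i j * d i j) \<le> K"
proof -
  have "(\<Sum>i\<in>UNIV. \<Sum>j\<in>UNIV. L i j * d i j) \<le> (\<Sum>i\<in>UNIV. \<Sum>j\<in>UNIV. L i j * K)"
    using assms by (intro sum_mono mult_left_mono) (auto simp: coup_def)
  also have "\<dots> = K * (\<Sum>i\<in>UNIV. \<Sum>j\<in>UNIV. L i j)"
    by (simp add: sum_distrib_left mult.commute)
  finally show ?thesis using coup_total[OF assms(1,2)] by simp
qed

lemma coup_expect:
  assumes "coup p q L"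
  shows "(\<Sum>i\<in>UNIV. p i * f i) - (\<Sum>j\<in>UNIV. q j * g j) = (\<Sum>i\<in>UNIV. \<Sum>j\<in>UNIV. L i j * (f i - g j))"
proof -
  have 1: "(\<Sum>i\<in>UNIV. p i * f i) = (\<Sum>i\<in>UNIV. \<Sum>j\<in>UNIV. L i j * f i)"
    using assms by (simp add: coup_def sum_distrib_right[symmetric])
  have 2: "(\<Sum>j\<in>UNIV. q j * g j) = (\<Sum>i\<in>UNIV. \<Sum>j\<in>UNIV. L i j * g j)"
  proof -
    have "(\<Sum>j\<in>UNIV. q j * g j) = (\<Sum>j\<in>UNIV. \<Sum>i\<in>UNIV. L i j * g j)"
      using assms by (simp add: coup_def sum_distrib_right[symmetric])
    also have "\<dots> = (\<Sum>i\<in>UNIV. \<Sum>j\<in>UNIV. L i j * g j)" by (rule sum.swap)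
    finally show ?thesis .
  qed
  show ?thesis unfolding 1 2 by (simp add: sum_subtractf right_diff_distrib)
qed

lemma W1_dual:
  assumes p: "is_dist p" and q: "is_dist q" and b: "\<forall>i j. \<bar>f i - g j\<bar> \<le> d i j + e"
  shows "\<bar>(\<Sum>i\<in>UNIV. p i * f i) - (\<Sum>j\<in>UNIV. q j * g j)\<bar> \<le> W1 p q d + e"
proof -
  have "\<bar>(\<Sum>i\<in>UNIV. p i * f i) - (\<Sum>j\<in>UNIV. q j * g j)\<bar> - e \<le> W1 p q d"
  proof (rule W1_greatest[OF p q])
    fix L assume L: "coup p q L"
    have "\<bar>(\<Sum>i\<in>UNIV. p i * f i) - (\<Sum>j\<in>UNIV. q j * g j)\<bar> = \<bar>\<Sum>i\<in>UNIV. \<Sum>j\<in>UNIV. L i j * (f i - g j)\<bar>"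
      using coup_expect[OF L] by simp
    also have "\<dots> \<le> (\<Sum>i\<in>UNIV. \<Sum>j\<in>UNIV. \<bar>L i j * (f i - g j)\<bar>)"
      by (rule order_trans[OF sum_abs sum_mono[OF sum_abs]])
    also have "\<dots> \<le> (\<Sum>i\<in>UNIV. \<Sum>j\<in>UNIV. L i j * d i j + L i j * e)"
      using L b by (intro sum_mono) (auto simp: coup_def abs_mult intro!: mult_left_mono simp flip: distrib_left)
    also have "\<dots> = (\<Sum>i\<in>UNIV. \<Sum>j\<in>UNIV. L i j * d i j) + e * (\<Sum>i\<in>UNIV. \<Sum>j\<in>UNIV. L i j)"
      by (simp add: sum.distrib sum_distrib_left mult.commute)
    also have "\<dots> = (\<Sum>i\<in>UNIV. \<Sum>j\<in>UNIV. L i j * d i j) + e"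
      using coup_total[OF L p] by simp
    finally show "\<bar>(\<Sum>i\<in>UNIV. p i * f i) - (\<Sum>j\<in>UNIV. q j * g j)\<bar> - e \<le> (\<Sum>i\<in>UNIV. \<Sum>j\<in>UNIV. L i j * d i j)"
      by simp
  qed
  thus ?thesis by simp
qed

lemma Rmax_ge: "\<bar>R i a - R' j a\<bar> \<le> R_max R R'"
proof -
  have "(\<lambda>(i, j, a). \<bar>R i a - R' j a\<bar>) (i, j, a) \<in> range (\<lambda>(i, j, a). \<bar>R i a - R' j a\<bar>)"
    by (rule rangeI)
  hence "(\<lambda>(i, j, a). \<bar>R i a - R' j a\<bar>) (i, j, a) \<le> R_max R R'"
    unfolding R_max_def by (intro Max_ge) auto
  thus ?thesis by simp
qed

lemma bisim_bounds:
  fixes P P' :: "'s::finite \<Rightarrow> 'a::finite \<Rightarrow> 's \<Rightarrow> real"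
  assumes g: "0 \<le> \<gamma>" "\<gamma> < 1" and d: "\<forall>s a. is_dist (P s a)" and d': "\<forall>s a. is_dist (P' s a)"
  shows "0 \<le> bisim_seq P R P' R' \<gamma> n t t' \<and> bisim_seq P R P' R' \<gamma> n t t' \<le> R_max R R' / (1 - \<gamma>)"
proof (induction n arbitrary: t t')
  case 0
  have "0 \<le> R_max R R'" using Rmax_ge[of R undefined undefined R' undefined] by linarith
  thus ?case using g by simp
next
  case (Suc n)
  let ?K = "R_max R R' / (1 - \<gamma>)"
  let ?f = "\<lambda>a. \<bar>R t a - R' t' a\<bar> + \<gamma> * W1 (P t a) (P' t' a) (bisim_seq P R P' R' \<gamma> n)"
  have W0: "0 \<le> W1 (P t a) (P' t' a) (bisim_seq P R P' R' \<gamma> n)" for a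
    using Suc d d' by (intro W1_nonneg) auto
  have WK: "W1 (P t a) (P' t' a) (bisim_seq P R P' R' \<gamma> n) \<le> ?K" for a
  proof -
    have c: "coup (P t a) (P' t' a) (\<lambda>i j. P t a i * P' t' a j)"
      using d d' by (intro coup_prod) auto
    show ?thesis
      using Suc d by (intro order_trans[OF W1_lower[OF c] coup_bound[OF c]]) auto
  qed
  have fK: "?f a \<le> ?K" for a
  proof -
    have "?f a \<le> R_max R R' + \<gamma> * ?K"
      using Rmax_ge[of R t a R' t'] mult_left_mono[OF WK[of a] g(1)] by linarith
    also have "\<dots> = ?K" using g by (simp add: field_simps)
    finally show ?thesis .
  qed
  have "0 \<le> ?f undefined" using W0[of undefined] g by simp
  also have "?f undefined \<le> Max (range ?f)" by (rule Max_ge) auto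
  finally have lo: "0 \<le> Max (range ?f)" .
  have hi: "Max (range ?f) \<le> ?K" using fK by (subst Max_le_iff) auto
  show ?case using lo hi by simp
qed

lemma bisim_le_metric:
  fixes P P' :: "'s::finite \<Rightarrow> 'a::finite \<Rightarrow> 's \<Rightarrow> real"
  assumes g: "0 \<le> \<gamma>" "\<gamma> < 1" and d: "\<forall>s a. is_dist (P s a)" and d': "\<forall>s a. is_dist (P' s a)"
  shows "bisim_seq P R P' R' \<gamma> n t t' \<le> bisim_metric P R P' R' \<gamma> t t'"
  unfolding bisim_metric_def
  by (rule cSUP_upper) (use bisim_bounds[OF assms] in \<open>auto intro!: bdd_aboveI[where M="R_max R R' / (1 - \<gamma>)"]\<close>)



lemma max_coup:
  assumes p: "is_dist p" and q: "is_dist q"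
  shows "\<exists>L. coup p q L \<and> (\<forall>d \<Delta> K. (\<forall>i. d i i \<le> \<Delta>) \<longrightarrow> (\<forall>i j. d i j \<le> K) \<longrightarrow> 0 \<le> \<Delta> \<longrightarrow>
            (\<Sum>i\<in>UNIV. \<Sum>j\<in>UNIV. L i j * d i j) \<le> \<Delta> + TV p q * K)"
proof -
  define m where "m i = min (p i) (q i)" for i
  define T where "T = 1 - sum m UNIV"
  define a where "a i = p i - m i" for i
  define b where "b j = q j - m j" for j
  define L where "L i j = (if i = j then m i else 0) + a i * b j / T" for i j
  have p0: "p i \<ge> 0" and q0: "q i \<ge> 0" for i using p q by (auto simp: is_dist_def)
  have sp: "sum p UNIV = 1" and sq: "sum q UNIV = 1" using p q by (auto simp: is_dist_def)
  have m0: "m i \<ge> 0" for i using p0 q0 by (simp add: m_def)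
  have a0: "a i \<ge> 0" and b0: "b i \<ge> 0" for i by (auto simp: a_def b_def m_def)
  have sa: "sum a UNIV = T" unfolding a_def T_def using sp by (simp add: sum_subtractf)
  have sb: "sum b UNIV = T" unfolding b_def T_def using sq by (simp add: sum_subtractf)
  have T0: "T \<ge> 0" using sa a0 sum_nonneg[of UNIV a] by auto
  have TV: "TV p q = T"
  proof -
    have "\<bar>p i - q i\<bar> = a i + b i" for i by (auto simp: a_def b_def m_def)
    hence "(\<Sum>s\<in>UNIV. \<bar>p s - q s\<bar>) = sum a UNIV + sum b UNIV" by (simp add: sum.distrib)
    thus ?thesis unfolding TV_def sa sb by simp
  qed
  have Tz: "a i = 0" "b i = 0" if "T = 0" for i
  proof -
    have "sum a UNIV = 0" "sum b UNIV = 0" using sa sb that by auto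
    thus "a i = 0" "b i = 0" using a0 b0 by (simp_all add: sum_nonneg_eq_0_iff)
  qed
  have row: "(\<Sum>j\<in>UNIV. L i j) = p i" for i
  proof -
    have "(\<Sum>j\<in>UNIV. L i j) = m i + a i * sum b UNIV / T"
      unfolding L_def by (simp add: sum.distrib sum_divide_distrib[symmetric] sum_distrib_left[symmetric])
    also have "a i * sum b UNIV / T = a i" unfolding sb using Tz by (cases "T = 0") auto
    finally show ?thesis by (simp add: a_def)
  qed
  have col: "(\<Sum>i\<in>UNIV. L i j) = q j" for j
  proof -
    have "(\<Sum>i\<in>UNIV. L i j) = m j + sum a UNIV * b j / T"
      unfolding L_def by (simp add: sum.distrib sum_divide_distrib[symmetric] sum_distrib_right[symmetric])
    also have "sum a UNIV * b j / T = b j" unfolding sa using Tz by (cases "T = 0") auto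
    finally show ?thesis by (simp add: b_def)
  qed
  have L0: "L i j \<ge> 0" for i j using m0 a0 b0 T0 by (simp add: L_def)
  have cp: "coup p q L" unfolding coup_def using L0 row col by auto
  have bound: "(\<Sum>i\<in>UNIV. \<Sum>j\<in>UNIV. L i j * d i j) \<le> \<Delta> + TV p q * K"
    if dD: "\<forall>i. d i i \<le> \<Delta>" and dK: "\<forall>i j. d i j \<le> K" and D0: "0 \<le> \<Delta>" for d \<Delta> K
  proof -
    have split: "(\<Sum>i\<in>UNIV. \<Sum>j\<in>UNIV. L i j * d i j) = (\<Sum>i\<in>UNIV. m i * d i i) + (\<Sum>i\<in>UNIV. \<Sum>j\<in>UNIV. a i * b j / T * d i j)"
    proof -
      have pw: "L i j * d i j = (if i = j then m i * d i j else 0) + a i * b j / T * d i j" for i j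
        by (simp add: L_def distrib_right)
      show ?thesis by (simp only: pw sum.distrib) (simp add: sum.delta)
    qed
    have 1: "(\<Sum>i\<in>UNIV. m i * d i i) \<le> \<Delta>"
    proof -
      have "(\<Sum>i\<in>UNIV. m i * d i i) \<le> (\<Sum>i\<in>UNIV. m i * \<Delta>)"
        using dD m0 by (intro sum_mono mult_left_mono) auto
      also have "\<dots> = (1 - T) * \<Delta>" by (simp add: T_def sum_distrib_right[symmetric])
      also have "\<dots> \<le> \<Delta>" using T0 D0 by (simp add: algebra_simps)
      finally show ?thesis .
    qed
    have 2: "(\<Sum>i\<in>UNIV. \<Sum>j\<in>UNIV. a i * b j / T * d i j) \<le> T * K"
    proof -
      have "(\<Sum>i\<in>UNIV. \<Sum>j\<in>UNIV. a i * b j / T * d i j) \<le> (\<Sum>i\<in>UNIV. \<Sum>j\<in>UNIV. a i * b j / T * K)"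
        using dK a0 b0 T0 by (intro sum_mono mult_left_mono) auto
      also have "\<dots> = K * (sum a UNIV * sum b UNIV / T)"
        by (simp add: sum_product sum_divide_distrib sum_distrib_left mult.commute mult.left_commute) (rule sum.swap)
      also have "\<dots> = T * K" unfolding sa sb by (cases "T = 0") auto
      finally show ?thesis .
    qed
    show ?thesis using split 1 2 TV by simp
  qed
  show ?thesis using cp bound by blast
qed

lemma TV_nonneg: "0 \<le> TV p q"
  unfolding TV_def by (simp add: sum_nonneg)

lemma dTV_nonneg:
  assumes g: "0 \<le> \<gamma>" "\<gamma> < 1"
  shows "0 \<le> d_TV P R P' R' \<gamma> s"
proof -
  let ?f = "\<lambda>a. \<bar>R s a - R' s a\<bar> + \<gamma> * R_max R R' / (1 - \<gamma>) * TV (P s a) (P' s a)"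
  have "0 \<le> R_max R R'" using Rmax_ge[of R undefined undefined R' undefined] by linarith
  hence "0 \<le> \<gamma> * R_max R R' / (1 - \<gamma>) * TV (P s undefined) (P' s undefined)"
    using g by (intro mult_nonneg_nonneg divide_nonneg_nonneg TV_nonneg) auto
  hence "0 \<le> ?f undefined" by (rule add_nonneg_nonneg[OF abs_ge_zero])
  also have "?f undefined \<le> Max (range ?f)" by (rule Max_ge) auto
  finally show ?thesis by (simp add: d_TV_def)
qed

lemma bisim_diag_bound:
  fixes P P' :: "'s::finite \<Rightarrow> 'a::finite \<Rightarrow> 's \<Rightarrow> real"
  assumes g: "0 \<le> \<gamma>" "\<gamma> < 1" and d: "\<forall>s a. is_dist (P s a)" and d': "\<forall>s a. is_dist (P' s a)"
  shows "bisim_seq P R P' R' \<gamma> n s s \<le> Max (range (d_TV P R P' R' \<gamma>)) / (1 - \<gamma>)"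
proof (induction n arbitrary: s)
  case 0
  have "0 \<le> d_TV P R P' R' \<gamma> undefined" by (rule dTV_nonneg[OF g])
  also have "\<dots> \<le> Max (range (d_TV P R P' R' \<gamma>))" by (rule Max_ge) auto
  finally show ?case using g by simp
next
  case (Suc n)
  let ?D = "Max (range (d_TV P R P' R' \<gamma>))"
  let ?K = "R_max R R' / (1 - \<gamma>)"
  let ?dn = "bisim_seq P R P' R' \<gamma> n"
  let ?Dn = "Max (range (\<lambda>t. ?dn t t))"
  have Dn: "?Dn \<le> ?D / (1 - \<gamma>)" using Suc by (subst Max_le_iff) auto
  have dnD: "?dn t t \<le> ?Dn" for t by (rule Max_ge) auto
  have Dn0: "0 \<le> ?Dn" using bisim_bounds[OF g d d', of R R' n undefined undefined] dnD[of undefined] by linarith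
  have fa: "\<bar>R s a - R' s a\<bar> + \<gamma> * W1 (P s a) (P' s a) ?dn \<le> ?D / (1 - \<gamma>)" for a
  proof -
    obtain L where L: "coup (P s a) (P' s a) L"
      and Lb: "\<forall>d \<Delta> K. (\<forall>i. d i i \<le> \<Delta>) \<longrightarrow> (\<forall>i j. d i j \<le> K) \<longrightarrow> 0 \<le> \<Delta> \<longrightarrow>
            (\<Sum>i\<in>UNIV. \<Sum>j\<in>UNIV. L i j * d i j) \<le> \<Delta> + TV (P s a) (P' s a) * K"
      using max_coup[of "P s a" "P' s a"] d d' by blast
    have "W1 (P s a) (P' s a) ?dn \<le> (\<Sum>i\<in>UNIV. \<Sum>j\<in>UNIV. L i j * ?dn i j)"
      using bisim_bounds[OF g d d'] by (intro W1_lower[OF L]) auto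
    also have "\<dots> \<le> ?Dn + TV (P s a) (P' s a) * ?K"
      using Lb dnD Dn0 bisim_bounds[OF g d d'] by blast
    finally have W: "W1 (P s a) (P' s a) ?dn \<le> ?Dn + TV (P s a) (P' s a) * ?K" .
    have "\<bar>R s a - R' s a\<bar> + \<gamma> * W1 (P s a) (P' s a) ?dn
        \<le> \<bar>R s a - R' s a\<bar> + \<gamma> * (?Dn + TV (P s a) (P' s a) * ?K)"
      using W g by (simp add: mult_left_mono)
    also have "\<dots> = (\<bar>R s a - R' s a\<bar> + \<gamma> * R_max R R' / (1 - \<gamma>) * TV (P s a) (P' s a)) + \<gamma> * ?Dn"
      by (simp add: algebra_simps)
    also have "\<dots> \<le> d_TV P R P' R' \<gamma> s + \<gamma> * ?Dn"
      by (rule add_right_mono, unfold d_TV_def, rule Max_ge) auto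
    also have "\<dots> \<le> ?D + \<gamma> * (?D / (1 - \<gamma>))"
    proof (rule add_mono)
      show "d_TV P R P' R' \<gamma> s \<le> ?D" by (rule Max_ge) auto
      show "\<gamma> * ?Dn \<le> \<gamma> * (?D / (1 - \<gamma>))" using Dn g by (rule_tac mult_left_mono) auto
    qed
    also have "\<dots> = ?D / (1 - \<gamma>)" using g by (simp add: field_simps)
    finally show ?thesis .
  qed
  show ?case unfolding bisim_seq.simps by (subst Max_le_iff) (auto intro: fa)
qed

lemma metric_diag_bound:
  fixes P P' :: "'s::finite \<Rightarrow> 'a::finite \<Rightarrow> 's \<Rightarrow> real"
  assumes g: "0 \<le> \<gamma>" "\<gamma> < 1" and d: "\<forall>s a. is_dist (P s a)" and d': "\<forall>s a. is_dist (P' s a)"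
  shows "bisim_metric P R P' R' \<gamma> s s \<le> Max (range (d_TV P R P' R' \<gamma>)) / (1 - \<gamma>)"
  unfolding bisim_metric_def by (rule cSUP_least) (use bisim_diag_bound[OF assms] in auto)



lemma abs_aff:
  fixes r r' x y \<gamma> :: real
  assumes "0 \<le> \<gamma>"
  shows "\<bar>(r + \<gamma> * x) - (r' + \<gamma> * y)\<bar> \<le> \<bar>r - r'\<bar> + \<gamma> * \<bar>x - y\<bar>"
proof -
  have "(r + \<gamma> * x) - (r' + \<gamma> * y) = (r - r') + \<gamma> * (x - y)" by (simp add: algebra_simps)
  moreover have "\<bar>(r - r') + \<gamma> * (x - y)\<bar> \<le> \<bar>r - r'\<bar> + \<bar>\<gamma> * (x - y)\<bar>" by (rule abs_triangle_ineq)
  ultimately show ?thesis using assms by (simp add: abs_mult)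
qed

lemma lipschitz:
  fixes P P' :: "'s::finite \<Rightarrow> 'a::finite \<Rightarrow> 's \<Rightarrow> real"
  assumes g: "0 \<le> \<gamma>" "\<gamma> < 1" and d: "\<forall>s a. is_dist (P s a)" and d': "\<forall>s a. is_dist (P' s a)"
  shows "\<bar>optimal_value P R \<gamma> t - optimal_value P' R' \<gamma> t'\<bar> \<le> bisim_seq P R P' R' \<gamma> n t t'
     + \<gamma>^n * Max (range (\<lambda>(t, t'). \<bar>optimal_value P R \<gamma> t - optimal_value P' R' \<gamma> t'\<bar>))"
proof (induction n arbitrary: t t')
  case 0
  let ?h = "\<lambda>(t, t'). \<bar>optimal_value P R \<gamma> t - optimal_value P' R' \<gamma> t'\<bar>"
  have "?h (t, t') \<le> Max (range ?h)" by (rule Max_ge) auto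
  thus ?case by simp
next
  case (Suc n)
  let ?M = "Max (range (\<lambda>(t, t'). \<bar>optimal_value P R \<gamma> t - optimal_value P' R' \<gamma> t'\<bar>))"
  let ?Vs = "optimal_value P R \<gamma>"
  let ?Ws = "optimal_value P' R' \<gamma>"
  let ?dn = "bisim_seq P R P' R' \<gamma> n"
  let ?f = "\<lambda>a. R t a + \<gamma> * (\<Sum>i\<in>UNIV. P t a i * ?Vs i)"
  let ?g = "\<lambda>a. R' t' a + \<gamma> * (\<Sum>i\<in>UNIV. P' t' a i * ?Ws i)"
  let ?h = "\<lambda>a. \<bar>R t a - R' t' a\<bar> + \<gamma> * W1 (P t a) (P' t' a) ?dn"
  have "\<bar>?Vs t - ?Ws t'\<bar> = \<bar>Max (range ?f) - Max (range ?g)\<bar>"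
    using optimal_fix[OF g d, of R t] optimal_fix[OF g d', of R' t'] by simp
  also have "\<dots> \<le> Max (range (\<lambda>a. \<bar>?f a - ?g a\<bar>))" by (rule Max_diff_le)
  also have "\<dots> \<le> Max (range ?h) + \<gamma>^Suc n * ?M"
  proof (subst Max_le_iff, simp, simp, clarify)
    fix a
    have W: "\<bar>(\<Sum>i\<in>UNIV. P t a i * ?Vs i) - (\<Sum>i\<in>UNIV. P' t' a i * ?Ws i)\<bar> \<le> W1 (P t a) (P' t' a) ?dn + \<gamma>^n * ?M"
      using d d' Suc by (intro W1_dual) auto
    have "\<bar>?f a - ?g a\<bar> \<le> \<bar>R t a - R' t' a\<bar> + \<gamma> * \<bar>(\<Sum>i\<in>UNIV. P t a i * ?Vs i) - (\<Sum>i\<in>UNIV. P' t' a i * ?Ws i)\<bar>"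
      by (rule abs_aff[OF g(1)])
    also have "\<dots> \<le> \<bar>R t a - R' t' a\<bar> + \<gamma> * (W1 (P t a) (P' t' a) ?dn + \<gamma>^n * ?M)"
      using W g by (simp add: mult_left_mono)
    also have "\<dots> = ?h a + \<gamma>^Suc n * ?M" by (simp add: algebra_simps)
    also have "\<dots> \<le> Max (range ?h) + \<gamma>^Suc n * ?M" by (rule add_right_mono, rule Max_ge) auto
    finally show "\<bar>?f a - ?g a\<bar> \<le> Max (range ?h) + \<gamma>^Suc n * ?M" .
  qed
  also have "Max (range ?h) = bisim_seq P R P' R' \<gamma> (Suc n) t t'" by simp
  finally show ?case .
qed

lemma geom_le_zero:
  fixes x c \<gamma> :: real
  assumes "0 \<le> \<gamma>" "\<gamma> < 1" "\<And>n. x \<le> c * \<gamma>^n"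
  shows "x \<le> 0"
proof -
  have "(\<lambda>n. c * \<gamma>^n) \<longlonglongrightarrow> c * 0"
    using assms by (intro tendsto_mult tendsto_const LIMSEQ_power_zero) auto
  thus ?thesis using assms(3) by (intro LIMSEQ_le_const[of "\<lambda>n. c * \<gamma>^n"]) auto
qed



theorem theorem1:
  fixes P P' :: "'s::finite \<Rightarrow> 'a::finite \<Rightarrow> 's \<Rightarrow> real"
    and R R' :: "'s \<Rightarrow> 'a \<Rightarrow> real"
    and \<gamma> :: real
    and \<pi> :: "'s \<Rightarrow> 'a"
  assumes "0 < \<gamma>" and "\<gamma> < 1"
    and "\<forall>s a. is_dist (P s a)"
    and "\<forall>s a. is_dist (P' s a)"
  shows "value_gap P R \<gamma> \<pi>
           \<le> 2 / (1 - \<gamma>) * Max ((\<lambda>s. bisim_metric P R P' R' \<gamma> s s) ` UNIV)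
             + (1 + \<gamma>) / (1 - \<gamma>) * value_gap P' R' \<gamma> \<pi>
       \<and> 2 / (1 - \<gamma>) * Max ((\<lambda>s. bisim_metric P R P' R' \<gamma> s s) ` UNIV)
             + (1 + \<gamma>) / (1 - \<gamma>) * value_gap P' R' \<gamma> \<pi>
           \<le> 2 / (1 - \<gamma>)\<^sup>2 * Max ((\<lambda>s. d_TV P R P' R' \<gamma> s) ` UNIV)
             + (1 + \<gamma>) / (1 - \<gamma>) * value_gap P' R' \<gamma> \<pi>"
proof -
  have g: "0 \<le> \<gamma>" "\<gamma> < 1" using assms by auto
  have d: "\<forall>s a. is_dist (P s a)" and d': "\<forall>s a. is_dist (P' s a)" using assms by auto
  define Vs where "Vs = optimal_value P R \<gamma>"
  define Vp where "Vp = policy_value P R \<gamma> \<pi>"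
  define Ws where "Ws = optimal_value P' R' \<gamma>"
  define Wp where "Wp = policy_value P' R' \<gamma> \<pi>"
  define G where "G = value_gap P R \<gamma> \<pi>"
  define G' where "G' = value_gap P' R' \<gamma> \<pi>"
  define \<delta> where "\<delta> = Max ((\<lambda>s. bisim_metric P R P' R' \<gamma> s s) ` UNIV)"
  define D where "D = Max ((\<lambda>s. d_TV P R P' R' \<gamma> s) ` UNIV)"
  define M where "M = Max (range (\<lambda>(t, t'). \<bar>optimal_value P R \<gamma> t - optimal_value P' R' \<gamma> t'\<bar>))"
  have Gge: "Vs s - Vp s \<le> G" for s
    unfolding G_def value_gap_def Vs_def Vp_def by (rule Max_ge) auto
  have G'ge: "Ws s - Wp s \<le> G'" for s
    unfolding G'_def value_gap_def Ws_def Wp_def by (rule Max_ge) auto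
  have WpWs: "Wp s \<le> Ws s" for s
    unfolding Wp_def Ws_def by (rule optimal_ge_policy[OF g d'])
  have G'0: "0 \<le> G'" using G'ge[of undefined] WpWs[of undefined] by linarith
  have \<delta>ge: "bisim_metric P R P' R' \<gamma> s s \<le> \<delta>" for s
    unfolding \<delta>_def by (rule Max_ge) auto
  have M0: "0 \<le> M"
  proof -
    let ?h = "\<lambda>(t, t'). \<bar>optimal_value P R \<gamma> t - optimal_value P' R' \<gamma> t'\<bar>"
    have "?h (undefined, undefined) \<le> M" unfolding M_def by (rule Max_ge) auto
    thus ?thesis by simp
  qed
  have lip: "\<bar>Vs t - Ws t'\<bar> \<le> bisim_seq P R P' R' \<gamma> n t t' + \<gamma>^n * M" for n t t'
    unfolding Vs_def Ws_def M_def by (rule lipschitz[OF g d d'])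
  have key: "Vs s - Vp s \<le> 2 * \<delta> + G' + \<gamma> * G + 2 * M * \<gamma>^n" for n s
  proof -
    let ?a = "\<pi> s"
    let ?dn = "bisim_seq P R P' R' \<gamma> n"
    have gnM: "0 \<le> \<gamma>^n * M" using g M0 by simp
    have A: "Vs s - Ws s \<le> \<delta> + \<gamma>^n * M"
      using lip[of s s n] bisim_le_metric[OF g d d', of R R' n s s] \<delta>ge[of s] by linarith
    have pV: "Vp s = R s ?a + \<gamma> * (\<Sum>t\<in>UNIV. P s ?a t * Vp t)"
      unfolding Vp_def by (rule policy_fix[OF g d])
    have pW: "Wp s = R' s ?a + \<gamma> * (\<Sum>t\<in>UNIV. P' s ?a t * Wp t)"
      unfolding Wp_def by (rule policy_fix[OF g d'])
    have s1: "(\<Sum>t\<in>UNIV. P' s ?a t * Wp t) \<le> (\<Sum>t\<in>UNIV. P' s ?a t * Ws t)"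
      using d' WpWs by (intro sum_mono mult_left_mono) (auto simp: is_dist_def)
    have s2: "(\<Sum>t\<in>UNIV. P s ?a t * Vs t) - (\<Sum>t\<in>UNIV. P s ?a t * Vp t) \<le> G"
    proof -
      have "(\<Sum>t\<in>UNIV. P s ?a t * Vs t) - (\<Sum>t\<in>UNIV. P s ?a t * Vp t) = (\<Sum>t\<in>UNIV. P s ?a t * (Vs t - Vp t))"
        by (simp add: sum_subtractf right_diff_distrib)
      also have "\<dots> \<le> (\<Sum>t\<in>UNIV. P s ?a t * G)"
        using d Gge by (intro sum_mono mult_left_mono) (auto simp: is_dist_def)
      also have "\<dots> = G" using d by (simp add: is_dist_def sum_distrib_right[symmetric])
      finally show ?thesis .
    qed
    have s3: "\<bar>(\<Sum>t\<in>UNIV. P s ?a t * Vs t) - (\<Sum>t\<in>UNIV. P' s ?a t * Ws t)\<bar> \<le> W1 (P s ?a) (P' s ?a) ?dn + \<gamma>^n * M"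
      using d d' lip by (intro W1_dual) auto
    have inner: "(\<Sum>t\<in>UNIV. P' s ?a t * Wp t) - (\<Sum>t\<in>UNIV. P s ?a t * Vp t) \<le> W1 (P s ?a) (P' s ?a) ?dn + \<gamma>^n * M + G"
      using s1 s2 s3 by linarith
    have "\<gamma> * ((\<Sum>t\<in>UNIV. P' s ?a t * Wp t) - (\<Sum>t\<in>UNIV. P s ?a t * Vp t)) \<le> \<gamma> * (W1 (P s ?a) (P' s ?a) ?dn + \<gamma>^n * M + G)"
      by (rule mult_left_mono[OF inner g(1)])
    hence C0: "Wp s - Vp s \<le> (R' s ?a - R s ?a) + \<gamma> * W1 (P s ?a) (P' s ?a) ?dn + \<gamma> * (\<gamma>^n * M) + \<gamma> * G"
      using pV pW by (simp add: algebra_simps)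
    have h: "\<bar>R s ?a - R' s ?a\<bar> + \<gamma> * W1 (P s ?a) (P' s ?a) ?dn \<le> bisim_seq P R P' R' \<gamma> (Suc n) s s"
      by simp
    have h2: "bisim_seq P R P' R' \<gamma> (Suc n) s s \<le> \<delta>"
      using bisim_le_metric[OF g d d', of R R' "Suc n" s s] \<delta>ge[of s] by linarith
    have h3: "\<gamma> * (\<gamma>^n * M) \<le> \<gamma>^n * M" using g gnM by (simp add: mult_left_le_one_le)
    have C: "Wp s - Vp s \<le> \<delta> + \<gamma>^n * M + \<gamma> * G"
      using C0 h h2 h3 abs_ge_self[of "R' s ?a - R s ?a"] abs_minus_commute[of "R s ?a" "R' s ?a"] by linarith
    show ?thesis using A C G'ge[of s] by (simp add: algebra_simps)
  qed
  have Gn: "G \<le> 2 * \<delta> + G' + \<gamma> * G + 2 * M * \<gamma>^n" for n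
  proof -
    have Geq: "G = Max (range (\<lambda>s. Vs s - Vp s))" by (simp add: G_def value_gap_def Vs_def Vp_def)
    have "Max (range (\<lambda>s. Vs s - Vp s)) \<le> 2 * \<delta> + G' + \<gamma> * G + 2 * M * \<gamma>^n"
      using key[of _ n] by (subst Max_le_iff) auto
    thus ?thesis using Geq by linarith
  qed
  have "(1 - \<gamma>) * G - (2 * \<delta> + G') \<le> 0"
    by (rule geom_le_zero[OF g, of _ "2 * M"]) (use Gn in \<open>simp add: algebra_simps\<close>)
  moreover have "0 \<le> \<gamma> * G'" using G'0 g by simp
  ultimately have part1: "(1 - \<gamma>) * G \<le> 2 * \<delta> + (1 + \<gamma>) * G'" by (simp add: algebra_simps)
  have ineq1: "G \<le> 2 / (1 - \<gamma>) * \<delta> + (1 + \<gamma>) / (1 - \<gamma>) * G'"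
  proof -
    have "2 / (1 - \<gamma>) * \<delta> + (1 + \<gamma>) / (1 - \<gamma>) * G' = (2 * \<delta> + (1 + \<gamma>) * G') / (1 - \<gamma>)"
      by (simp only: times_divide_eq_left) (rule add_divide_distrib[symmetric])
    moreover have "G \<le> (2 * \<delta> + (1 + \<gamma>) * G') / (1 - \<gamma>)"
      using part1 g by (simp add: pos_le_divide_eq mult.commute)
    ultimately show ?thesis by simp
  qed
  have \<delta>D: "\<delta> \<le> D / (1 - \<gamma>)"
    unfolding \<delta>_def D_def using metric_diag_bound[OF g d d'] by (subst Max_le_iff) auto
  have ineq2: "2 / (1 - \<gamma>) * \<delta> \<le> 2 / (1 - \<gamma>)\<^sup>2 * D"
  proof -
    have "2 / (1 - \<gamma>) * \<delta> \<le> 2 / (1 - \<gamma>) * (D / (1 - \<gamma>))"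
      using \<delta>D g by (intro mult_left_mono) auto
    also have "\<dots> = 2 / (1 - \<gamma>)\<^sup>2 * D" by (simp add: power2_eq_square)
    finally show ?thesis .
  qed
  show ?thesis using ineq1 ineq2 unfolding G_def G'_def \<delta>_def D_def by simp
qed

end
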